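(* Let $G$ be a profinite-$C$ group, let $H$ be a closed subgroup of $G$ and let $N$ be a closed normal subgroup of $G$. Then: (i) If $S$ is a closed subgroup of $G$ with $G=HS$, then $S$ contains a closed permutable complement of $H$ in $G$. (ii) If $S$ is a closed subgroup of $G$ containing $N$ such that $S/N$ is a closed permutable complement of $HN/N$ in $G/N$, then there exists a closed permutable complement $K$ of $H$ in $G$ such that $S=KN$.
   Context: A permutable complement of a subgroup $H$ of a group $G$ is a subgroup $K$ with $G=HK$ and $H\cap K=1$. A profinite group $G$ is a profinite-$C$ group if every closed subgroup of $G$ has a closed permutable complement in $G$. *)

theory Defs
  imports "HOL-Analysis.Analysis" "HOL-Algebra.Coset"
begin

definition topological_group :: "('a, 'b) monoid_scheme \<Rightarrow> 'a topology \<Rightarrow> bool" where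
  "topological_group G T \<longleftrightarrow> group G \<and> topspace T = carrier G \<and>
     continuous_map (prod_topology T T) T (\<lambda>(x, y). x \<otimes>\<^bsub>G\<^esub> y) \<and>
     continuous_map T T (\<lambda>x. inv\<^bsub>G\<^esub> x)"

text \<open>Profinite group: compact, Hausdorff, totally disconnected topological group
(the standard characterisation of inverse limits of finite groups).\<close>
definition profinite_group :: "('a, 'b) monoid_scheme \<Rightarrow> 'a topology \<Rightarrow> bool" where
  "profinite_group G T \<longleftrightarrow> topological_group G T \<and> compact_space T \<and> Hausdorff_space T \<and>
     (\<forall>x \<in> topspace T. connected_component_of_set T x = {x})"

definition closed_subgroup :: "('a, 'b) monoid_scheme \<Rightarrow> 'a topology \<Rightarrow> 'a set \<Rightarrow> bool" where
  "closed_subgroup G T H \<longleftrightarrow> subgroup H G \<and> closedin T H"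

definition perm_complement :: "('a, 'b) monoid_scheme \<Rightarrow> 'a set \<Rightarrow> 'a set \<Rightarrow> bool" where
  "perm_complement G H K \<longleftrightarrow> subgroup K G \<and> H <#>\<^bsub>G\<^esub> K = carrier G \<and> H \<inter> K = {\<one>\<^bsub>G\<^esub>}"

definition profinite_C :: "('a, 'b) monoid_scheme \<Rightarrow> 'a topology \<Rightarrow> bool" where
  "profinite_C G T \<longleftrightarrow> profinite_group G T \<and>
     (\<forall>H. closed_subgroup G T H \<longrightarrow> (\<exists>K. closed_subgroup G T K \<and> perm_complement G H K))"

definition quot_topology :: "('a, 'b) monoid_scheme \<Rightarrow> 'a topology \<Rightarrow> 'a set \<Rightarrow> 'a set topology" where
  "quot_topology G T N = topology (\<lambda>U. U \<subseteq> rcosets\<^bsub>G\<^esub> N \<and> openin T (\<Union>U))"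

definition quot_image :: "('a, 'b) monoid_scheme \<Rightarrow> 'a set \<Rightarrow> 'a set \<Rightarrow> 'a set set" where
  "quot_image G N A = (\<lambda>a. N #>\<^bsub>G\<^esub> a) ` A"

end

theory Submission
  imports Defs
begin

lemma smE:
  assumes "x \<in> A <#>\<^bsub>G\<^esub> B"
  obtains a b where "a \<in> A" "b \<in> B" "x = a \<otimes>\<^bsub>G\<^esub> b"
  using assms unfolding set_mult_def by blast

lemma smI:
  assumes "a \<in> A" "b \<in> B" "x = a \<otimes>\<^bsub>G\<^esub> b"
  shows "x \<in> A <#>\<^bsub>G\<^esub> B"
  using assms unfolding set_mult_def by blast

lemma partI:
  fixes G :: "('a, 'b) monoid_scheme" (structure) and T :: "'a topology"
  assumes C: "profinite_C G T"
    and cH: "closed_subgroup G T H"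
    and cS: "closed_subgroup G T S" and HS: "H <#>\<^bsub>G\<^esub> S = carrier G"
  shows "\<exists>K. K \<subseteq> S \<and> closed_subgroup G T K \<and> perm_complement G H K"
proof -
  have grp: "group G" using C unfolding profinite_C_def profinite_group_def topological_group_def by blast
  interpret group G by (rule grp)
  have sH: "subgroup H G" and clH: "closedin T H" using cH unfolding closed_subgroup_def by auto
  have sS: "subgroup S G" and clS: "closedin T S" using cS unfolding closed_subgroup_def by auto
  have "closed_subgroup G T (H \<inter> S)"
    unfolding closed_subgroup_def using subgroups_Inter_pair[OF sH sS] closedin_Int[OF clH clS] by simp
  then obtain L where cL: "closed_subgroup G T L" and pL: "perm_complement G (H \<inter> S) L"
    using C unfolding profinite_C_def by blast
  have sL: "subgroup L G" and clL: "closedin T L" using cL unfolding closed_subgroup_def by auto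
  have DL: "(H \<inter> S) <#> L = carrier G" and DLi: "H \<inter> S \<inter> L = {\<one>}"
    using pL unfolding perm_complement_def by auto
  define K where "K = S \<inter> L"
  have sK: "subgroup K G" unfolding K_def using subgroups_Inter_pair[OF sS sL] .
  have clK: "closedin T K" unfolding K_def using closedin_Int[OF clS clL] .
  have "H <#> K = carrier G"
  proof
    show "H <#> K \<subseteq> carrier G"
      using set_mult_closed subgroup.subset[OF sH] subgroup.subset[OF sK] by blast
    show "carrier G \<subseteq> H <#> K"
    proof
      fix g assume g: "g \<in> carrier G"
      then obtain h s where h: "h \<in> H" and s: "s \<in> S" and gd: "g = h \<otimes> s"
        using HS g by (metis smE)
      have sc: "s \<in> carrier G" using subgroup.mem_carrier[OF sS s] .
      then obtain d l where d: "d \<in> H \<inter> S" and l: "l \<in> L" and sd: "s = d \<otimes> l"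
        using DL by (metis smE)
      have dc: "d \<in> carrier G" using subgroup.mem_carrier[OF sS IntD2[OF d]] .
      have lc: "l \<in> carrier G" using subgroup.mem_carrier[OF sL l] .
      have hc: "h \<in> carrier G" using subgroup.mem_carrier[OF sH h] .
      have "l = inv d \<otimes> s" using sd dc lc by (simp add: m_assoc[symmetric])
      hence "l \<in> S" using d s sS by (simp add: subgroup.m_closed subgroup.m_inv_closed)
      hence lK: "l \<in> K" using l K_def by simp
      have hd: "h \<otimes> d \<in> H" using h d sH by (simp add: subgroup.m_closed)
      have "g = (h \<otimes> d) \<otimes> l" using gd sd hc dc lc by (simp add: m_assoc)
      thus "g \<in> H <#> K" by (rule smI[OF hd lK])
    qed
  qed
  moreover have "H \<inter> K = {\<one>}" using DLi K_def by blast
  ultimately show ?thesis using sK clK unfolding K_def perm_complement_def closed_subgroup_def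
    by blast
qed

lemma partII:
  fixes G :: "('a, 'b) monoid_scheme" (structure) and T :: "'a topology"
  assumes "profinite_C G T"
    and "closed_subgroup G T H"
    and "closed_subgroup G T N" and "N \<lhd> G"
    and A: "closed_subgroup G T S \<and> N \<subseteq> S \<and> closed_subgroup (G Mod N) (quot_topology G T N) (quot_image G N S) \<and> perm_complement (G Mod N) (quot_image G N (H <#>\<^bsub>G\<^esub> N)) (quot_image G N S)"
  shows "\<exists>K. closed_subgroup G T K \<and> perm_complement G H K \<and> S = K <#>\<^bsub>G\<^esub> N"
proof -
  interpret normal N G by (rule assms(4))
  have sH: "subgroup H G" using assms(2) unfolding closed_subgroup_def by auto
  have cS: "closed_subgroup G T S" and NS: "N \<subseteq> S" using A by auto
  have sS: "subgroup S G" using cS unfolding closed_subgroup_def by auto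
  have sN: "subgroup N G" by (rule subgroup_axioms)
  have P1: "quot_image G N (H <#> N) <#>\<^bsub>G Mod N\<^esub> quot_image G N S = rcosets N"
    and P2: "quot_image G N (H <#> N) \<inter> quot_image G N S = {N}"
  proof -
    have pc: "perm_complement (G Mod N) (quot_image G N (H <#> N)) (quot_image G N S)" using A by blast
    show "quot_image G N (H <#> N) <#>\<^bsub>G Mod N\<^esub> quot_image G N S = rcosets N"
      using pc unfolding perm_complement_def by (simp add: FactGroup_def)
    show "quot_image G N (H <#> N) \<inter> quot_image G N S = {N}"
      using pc unfolding perm_complement_def by (simp add: FactGroup_def)
  qed
  have HS: "H <#> S = carrier G"
  proof
    show "H <#> S \<subseteq> carrier G"
      using set_mult_closed subgroup.subset[OF sH] subgroup.subset[OF sS] by blast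
    show "carrier G \<subseteq> H <#> S"
    proof
      fix g assume g: "g \<in> carrier G"
      hence "N #> g \<in> rcosets N" unfolding RCOSETS_def by blast
      hence "N #> g \<in> quot_image G N (H <#> N) <#>\<^bsub>G Mod N\<^esub> quot_image G N S"
        using P1 by simp
      then obtain a b where a: "a \<in> quot_image G N (H <#> N)" and b: "b \<in> quot_image G N S"
          and ab: "N #> g = a \<otimes>\<^bsub>G Mod N\<^esub> b"
        by (metis smE)
      obtain x where x: "x \<in> H <#> N" and ax: "a = N #> x" using a unfolding quot_image_def by blast
      obtain s where s: "s \<in> S" and bs: "b = N #> s" using b unfolding quot_image_def by blast
      have eq: "N #> g = (N #> x) <#> (N #> s)" using ab ax bs by (simp add: FactGroup_def)
      obtain h n' where h: "h \<in> H" and n': "n' \<in> N" and xd: "x = h \<otimes> n'"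
        using x by (metis smE)
      have hc: "h \<in> carrier G" using subgroup.mem_carrier[OF sH h] .
      have n'c: "n' \<in> carrier G" using subgroup.mem_carrier[OF sN n'] .
      have sc: "s \<in> carrier G" using subgroup.mem_carrier[OF sS s] .
      have xc: "x \<in> carrier G" using xd hc n'c by simp
      have "N #> g = N #> (x \<otimes> s)" using eq rcos_sum[OF xc sc] by simp
      moreover have "g \<in> N #> g" by (rule rcos_self[OF g sN])
      ultimately have "g \<in> N #> (x \<otimes> s)" by simp
      then obtain n where n: "n \<in> N" and gd: "g = n \<otimes> (x \<otimes> s)"
        unfolding r_coset_def by blast
      have nc: "n \<in> carrier G" using subgroup.mem_carrier[OF sN n] .
      have m: "inv h \<otimes> n \<otimes> h \<in> N" using inv_op_closed1 hc n by blast
      have "g = h \<otimes> ((inv h \<otimes> n \<otimes> h) \<otimes> n' \<otimes> s)"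
        using gd xd hc nc n'c sc by (simp add: m_assoc[symmetric])
      moreover have "(inv h \<otimes> n \<otimes> h) \<otimes> n' \<otimes> s \<in> S"
        using m n' s NS sS by (simp add: subgroup.m_closed subsetD)
      ultimately show "g \<in> H <#> S" using h by (metis smI)
    qed
  qed
  have HSN: "H \<inter> S \<subseteq> N"
  proof
    fix y assume y: "y \<in> H \<inter> S"
    have yc: "y \<in> carrier G" using subgroup.mem_carrier[OF sH IntD1[OF y]] .
    have "y \<in> H <#> N" using y subgroup.one_closed[OF sN] r_one[OF yc]
      by (intro smI[of y H \<one> N]) auto
    hence "N #> y \<in> quot_image G N (H <#> N) \<inter> quot_image G N S"
      using y unfolding quot_image_def by blast
    hence "N #> y = N" using P2 by blast
    thus "y \<in> N" using rcos_self[OF yc sN] by simp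
  qed
  obtain K where KS: "K \<subseteq> S" and cK: "closed_subgroup G T K" and pK: "perm_complement G H K"
    using partI[OF assms(1,2) cS HS] by blast
  have sK: "subgroup K G" using cK unfolding closed_subgroup_def by auto
  have HK: "H <#> K = carrier G" using pK unfolding perm_complement_def by auto
  have "S = K <#> N"
  proof
    show "K <#> N \<subseteq> S"
    proof
      fix z assume "z \<in> K <#> N"
      then obtain k n where "k \<in> K" "n \<in> N" "z = k \<otimes> n" by (rule smE)
      thus "z \<in> S" using KS NS subgroup.m_closed[OF sS] by blast
    qed
    show "S \<subseteq> K <#> N"
    proof
      fix s assume s: "s \<in> S"
      have sc: "s \<in> carrier G" using subgroup.mem_carrier[OF sS s] .
      then obtain h k where h: "h \<in> H" and k: "k \<in> K" and sd: "s = h \<otimes> k"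
        using HK by (metis smE)
      have hc: "h \<in> carrier G" using subgroup.mem_carrier[OF sH h] .
      have kc: "k \<in> carrier G" using subgroup.mem_carrier[OF sK k] .
      have "h = s \<otimes> inv k" using sd hc kc by (simp add: m_assoc)
      hence "h \<in> S" using s k KS sS by (auto intro!: subgroup.m_closed subgroup.m_inv_closed)
      hence hN: "h \<in> N" using h HSN by blast
      have m: "inv k \<otimes> h \<otimes> k \<in> N" using inv_op_closed1 kc hN by blast
      have "s = k \<otimes> (inv k \<otimes> h \<otimes> k)" using sd hc kc by (simp add: m_assoc[symmetric])
      thus "s \<in> K <#> N" by (rule smI[OF k m])
    qed
  qed
  thus ?thesis
    using cK pK by blast
qed


theorem lemma2p2:
  fixes G :: "('a, 'b) monoid_scheme" and T :: "'a topology"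
  assumes "profinite_C G T"
    and "closed_subgroup G T H"
    and "closed_subgroup G T N" and "N \<lhd> G"
  shows "(\<forall>S. closed_subgroup G T S \<and> H <#>\<^bsub>G\<^esub> S = carrier G \<longrightarrow>
            (\<exists>K. K \<subseteq> S \<and> closed_subgroup G T K \<and> perm_complement G H K))
       \<and> (\<forall>S. closed_subgroup G T S \<and> N \<subseteq> S \<and>
            closed_subgroup (G Mod N) (quot_topology G T N) (quot_image G N S) \<and>
            perm_complement (G Mod N) (quot_image G N (H <#>\<^bsub>G\<^esub> N)) (quot_image G N S) \<longrightarrow>
            (\<exists>K. closed_subgroup G T K \<and> perm_complement G H K \<and> S = K <#>\<^bsub>G\<^esub> N))"
  using partI[OF assms(1,2)] partII[OF assms] by blast

end
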